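(* On $\mathbb{R}^2$ with standard coordinates $(x,y)$, let $E_1:=x\frac{\partial}{\partial x}+\frac{\partial}{\partial y}$, $E_2:=-\frac{\partial}{\partial x}$, with dual coframe $E^1=dy$, $E^2=-dx+x\,dy$, and let $F\colon T\mathbb{R}^2\to\mathbb{R}$ be the Randers-type Finsler function $F=\sqrt{4(E^1)^2+12(E^2)^2}-E^1=\sqrt{4(dy)^2+12(-dx+x\,dy)^2}-dy$. Let $\nabla$ be the covariant derivative on $\mathbb{R}^2$ with $\nabla E_1=\nabla E_2=0$. Then: (i) $F$ is holonomy invariant with respect to $\nabla$, so $(\mathbb{R}^2,F)$ is a generalized Berwald manifold; (ii) $\nabla$ is the only covariant derivative on $\mathbb{R}^2$ with respect to which $F$ is holonomy invariant; (iii) the torsion of $\nabla$ satisfies $T^\nabla(E_1,E_2)=-\frac{\partial}{\partial x}\neq0$. Consequently no torsion-free covariant derivative makes $F$ holonomy invariant, i.e. $(\mathbb{R}^2,F)$ is not a Berwald manifold.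
   Context: A function $F$ on $TM$ is holonomy invariant with respect to a covariant derivative $\nabla$ if $F_{\gamma(t)}\circ P^t_\gamma=F_{\gamma(0)}$ for every regular smooth curve $\gamma\colon I\to M$ ($I$ an open interval containing $0$) and every $t\in I$, where $F_p$ is the restriction of $F$ to $T_pM$ and $P^t_\gamma$ is $\nabla$-parallel translation from $\gamma(0)$ to $\gamma(t)$. A Finsler manifold $(M,F)$ is a generalized Berwald manifold if $F$ is holonomy invariant with respect to some covariant derivative on $M$, and a Berwald manifold if this covariant derivative can be chosen torsion-free. The torsion is $T^\nabla(X,Y)=\nabla_XY-\nabla_YX-[X,Y]$. *)

theory Defs
  imports "HOL-Analysis.Analysis"
begin

(* Points of R^2 and tangent vectors are elements of real^2; coordinates x = p$1, y = p$2.
   A tangent vector v at p has components v$1, v$2 w.r.t. d/dx, d/dy. *)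

definition pd :: "('a::euclidean_space \<Rightarrow> 'b::real_normed_vector) \<Rightarrow> 'a \<Rightarrow> 'a \<Rightarrow> 'b" where
  "pd f i x = frechet_derivative f (at x) i"

definition smooth_on :: "'a::euclidean_space set \<Rightarrow> ('a \<Rightarrow> 'b::real_normed_vector) \<Rightarrow> bool" where
  "smooth_on S f \<longleftrightarrow> (\<forall>is \<in> lists Basis. (fold (\<lambda>i g. pd g i) is f) differentiable_on S)"

(* A covariant derivative on R^2 is given by its Christoffel symbols w.r.t. the coordinate frame:
   nabla_{d_i} d_j = sum_k Gam k i j d_k, with smooth Gam. *)
type_synonym christoffel = "2 \<Rightarrow> 2 \<Rightarrow> 2 \<Rightarrow> real^2 \<Rightarrow> real"

definition is_covD :: "christoffel \<Rightarrow> bool" where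
  "is_covD Gam \<longleftrightarrow> (\<forall>k i j. smooth_on UNIV (Gam k i j))"

definition covD :: "christoffel \<Rightarrow> (real^2 \<Rightarrow> real^2) \<Rightarrow> (real^2 \<Rightarrow> real^2) \<Rightarrow> real^2 \<Rightarrow> real^2" where
  "covD Gam X Y p = (\<chi> k. (\<Sum>i\<in>UNIV. X p $ i * pd (\<lambda>q. Y q $ k) (axis i 1) p)
      + (\<Sum>i\<in>UNIV. \<Sum>j\<in>UNIV. Gam k i j p * X p $ i * Y p $ j))"

definition lie_bracket :: "(real^2 \<Rightarrow> real^2) \<Rightarrow> (real^2 \<Rightarrow> real^2) \<Rightarrow> real^2 \<Rightarrow> real^2" where
  "lie_bracket X Y p = (\<chi> k. \<Sum>i\<in>UNIV. X p $ i * pd (\<lambda>q. Y q $ k) (axis i 1) p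
                                       - Y p $ i * pd (\<lambda>q. X q $ k) (axis i 1) p)"

definition torsion :: "christoffel \<Rightarrow> (real^2 \<Rightarrow> real^2) \<Rightarrow> (real^2 \<Rightarrow> real^2) \<Rightarrow> real^2 \<Rightarrow> real^2" where
  "torsion Gam X Y p = covD Gam X Y p - covD Gam Y X p - lie_bracket X Y p"

definition torsion_free :: "christoffel \<Rightarrow> bool" where
  "torsion_free Gam \<longleftrightarrow> (\<forall>X Y. smooth_on UNIV X \<and> smooth_on UNIV Y \<longrightarrow> torsion Gam X Y = (\<lambda>p. 0))"

definition regular_smooth_curve :: "real set \<Rightarrow> (real \<Rightarrow> real^2) \<Rightarrow> bool" where
  "regular_smooth_curve I \<gamma> \<longleftrightarrow> smooth_on I \<gamma> \<and> (\<forall>t\<in>I. vector_derivative \<gamma> (at t) \<noteq> 0)"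

definition parallel_along :: "christoffel \<Rightarrow> real set \<Rightarrow> (real \<Rightarrow> real^2) \<Rightarrow> (real \<Rightarrow> real^2) \<Rightarrow> bool" where
  "parallel_along Gam I \<gamma> V \<longleftrightarrow> (\<forall>t\<in>I. (V has_vector_derivative
      (\<chi> k. - (\<Sum>i\<in>UNIV. \<Sum>j\<in>UNIV. Gam k i j (\<gamma> t) * vector_derivative \<gamma> (at t) $ i * V t $ j))) (at t))"

(* F_{gamma(t)} o P^t_gamma = F_{gamma(0)}: the value of F is constant along every parallel field
   along every regular smooth curve defined on an open interval containing 0 *)
definition holonomy_invariant :: "christoffel \<Rightarrow> (real^2 \<Rightarrow> real^2 \<Rightarrow> real) \<Rightarrow> bool" where
  "holonomy_invariant Gam F \<longleftrightarrow>
     (\<forall>a b \<gamma> V t. a < 0 \<and> 0 < b \<and> regular_smooth_curve {a<..<b} \<gamma>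
        \<and> parallel_along Gam {a<..<b} \<gamma> V \<and> t \<in> {a<..<b}
        \<longrightarrow> F (\<gamma> t) (V t) = F (\<gamma> 0) (V 0))"

definition generalized_Berwald :: "(real^2 \<Rightarrow> real^2 \<Rightarrow> real) \<Rightarrow> bool" where
  "generalized_Berwald F \<longleftrightarrow> (\<exists>Gam. is_covD Gam \<and> holonomy_invariant Gam F)"

definition Berwald :: "(real^2 \<Rightarrow> real^2 \<Rightarrow> real) \<Rightarrow> bool" where
  "Berwald F \<longleftrightarrow> (\<exists>Gam. is_covD Gam \<and> torsion_free Gam \<and> holonomy_invariant Gam F)"

definition E1 :: "real^2 \<Rightarrow> real^2" where "E1 p = vector [p $ 1, 1]"
definition E2 :: "real^2 \<Rightarrow> real^2" where "E2 p = vector [-1, 0]"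

definition Fex :: "real^2 \<Rightarrow> real^2 \<Rightarrow> real" where
  "Fex p v = sqrt (4 * (v $ 2)^2 + 12 * (- (v $ 1) + p $ 1 * v $ 2)^2) - v $ 2"

end

theory Submission
  imports Defs
begin


lemma pd_affine:
  assumes "\<And>x. f x = c + L x" "linear L"
  shows "pd f i x = L i"
proof -
  have "(f has_derivative L) (at x)"
    unfolding assms(1)[abs_def]
    by (auto intro!: derivative_eq_intros linear_imp_has_derivative[OF assms(2)])
  then show ?thesis unfolding pd_def using frechet_derivative_at by metis
qed

lemma pd_const: "pd (\<lambda>_. c) i x = 0"
  using pd_affine[of "\<lambda>_. c" c "\<lambda>_. 0"] by (simp add: linear_zero)

lemma fold_const: "fold (\<lambda>i g. pd g i) is (\<lambda>_. c) = (\<lambda>_. (if is=[] then c else 0))"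
proof (induction "is" arbitrary: c)
  case Nil then show ?case by simp
next
  case (Cons a r)
  have "(\<lambda>x. pd (\<lambda>_. c) a x) = (\<lambda>_. 0)" by (simp add: pd_const)
  then show ?case using Cons by (simp add: pd_const[abs_def])
qed

lemma smooth_const: "smooth_on S (\<lambda>_. c)"
  unfolding smooth_on_def fold_const by simp

lemma smooth_affine:
  fixes f :: "'a::euclidean_space \<Rightarrow> 'b::real_normed_vector"
  assumes "\<And>x. f x = c + L x" "linear L"
  shows "smooth_on S f"
  unfolding smooth_on_def
proof
  fix "is" :: "'a list" assume "is \<in> lists Basis"
  show "fold (\<lambda>i g. pd g i) is f differentiable_on S"
  proof (cases "is")
    case Nil
    have "(f has_derivative L) (at x)" for x
      unfolding assms(1)[abs_def]
      by (auto intro!: derivative_eq_intros linear_imp_has_derivative[OF assms(2)])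
    then show ?thesis using Nil by (metis differentiable_at_withinI differentiable_def differentiable_on_def fold_Nil id_apply)
  next
    case (Cons a r)
    have "(\<lambda>x. pd f a x) = (\<lambda>_. L a)" using pd_affine[OF assms] by auto
    then show ?thesis using Cons by (simp add: fold_const)
  qed
qed



definition Gam0 :: christoffel where
  "Gam0 k i j p = (if k = 1 \<and> i = 1 \<and> j = 2 then -1 else 0)"

lemma two_ne: "(1::2) \<noteq> 2" "(2::2) \<noteq> 1" by simp_all

lemma pdE1: "pd (\<lambda>q. E1 q $ k) v p = (if k = 1 then v $ 1 else 0)"
proof (cases "k = 1")
  case True
  have "pd (\<lambda>q. E1 q $ k) v p = v $ 1"
    by (rule pd_affine[where c=0]) (auto simp: E1_def True bounded_linear.linear[OF bounded_linear_vec_nth])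
  then show ?thesis using True by simp
next
  case False
  then have k: "k = 2" using exhaust_2 by blast
  have "(\<lambda>q. E1 q $ k) = (\<lambda>_. 1)" by (auto simp: E1_def k)
  then show ?thesis by (simp add: pd_const k)
qed

lemma pdE2: "pd (\<lambda>q. E2 q $ k) v p = 0"
proof -
  have "(\<lambda>q. E2 q $ k) = (\<lambda>_. E2 0 $ k)" by (auto simp: E2_def)
  then show ?thesis by (simp add: pd_const)
qed

lemma E1_nth[simp]: "E1 p $ 1 = p $ 1" "E1 p $ 2 = 1" by (simp_all add: E1_def)
lemma E2_nth[simp]: "E2 p $ 1 = -1" "E2 p $ 2 = 0" by (simp_all add: E2_def)

lemma axis1: "axis (i::2) (1::real) $ 1 = (if i = 1 then 1 else 0)"
  by (auto simp: axis_def)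

lemma covD_E1: "covD Gam0 X E1 = (\<lambda>p. 0)"
  by (rule ext, simp add: covD_def vec_eq_iff forall_2 sum_2 pdE1 axis1 Gam0_def two_ne)

lemma covD_E2: "covD Gam0 X E2 = (\<lambda>p. 0)"
  by (rule ext, simp add: covD_def vec_eq_iff forall_2 sum_2 pdE2 Gam0_def two_ne)

lemma is_covD_Gam0: "is_covD Gam0"
proof -
  have "Gam0 k i j = (\<lambda>_. Gam0 k i j 0)" for k i j by (auto simp: Gam0_def)
  then show ?thesis unfolding is_covD_def by (metis smooth_const)
qed

lemma Gam_unique0:
  assumes "\<forall>X. covD Gam X E1 = (\<lambda>p. 0)" "\<forall>X. covD Gam X E2 = (\<lambda>p. 0)"
  shows "Gam = Gam0"
proof -
  have "Gam k i j p = Gam0 k i j p" for k i j p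
  proof -
    have h1: "covD Gam (\<lambda>_. axis i 1) E1 p $ k = 0" using assms(1) by simp
    have h2: "covD Gam (\<lambda>_. axis i 1) E2 p $ k = 0" using assms(2) by simp
    have e1: "(if k = 1 \<and> i = 1 then 1 else 0) + Gam k i 1 p * p $ 1 + Gam k i 2 p = 0"
      using h1 exhaust_2[of i] exhaust_2[of k]
      by (auto simp: covD_def sum_2 pdE1 axis_def two_ne)
    have e2: "Gam k i 1 p = 0"
      using h2 exhaust_2[of i] exhaust_2[of k]
      by (auto simp: covD_def sum_2 pdE2 axis_def two_ne)
    show ?thesis using e1 e2 exhaust_2[of j] by (auto simp: Gam0_def split: if_splits)
  qed
  then show ?thesis by (intro ext)
qed

lemma lie_E1E2: "lie_bracket E1 E2 = (\<lambda>p. vector [1, 0])"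
  by (rule ext, simp add: lie_bracket_def vec_eq_iff forall_2 sum_2 pdE1 pdE2 axis1 two_ne)

lemma torsion_E1E2:
  assumes "\<forall>X. covD Gam X E1 = (\<lambda>p. 0)" "\<forall>X. covD Gam X E2 = (\<lambda>p. 0)"
  shows "torsion Gam E1 E2 = (\<lambda>p. vector [-1, 0])"
  using assms by (auto simp: torsion_def lie_E1E2 vec_eq_iff forall_2)

lemma smooth_E1: "smooth_on UNIV E1"
  by (rule smooth_affine[where c="vector [0,1]" and L="\<lambda>p. vector [p $ 1, 0]"])
     (auto simp: E1_def vec_eq_iff forall_2 linear_iff)

lemma smooth_E2: "smooth_on UNIV E2"
  unfolding E2_def by (rule smooth_const)



lemma vd_nth:
  assumes "(f has_vector_derivative f') F"
  shows "((\<lambda>x. f x $ k) has_real_derivative f' $ k) F"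
proof -
  have "((\<lambda>x. f x $ k) has_derivative (\<lambda>h. (h *\<^sub>R f') $ k)) F"
    using bounded_linear.has_derivative[OF bounded_linear_vec_nth assms[unfolded has_vector_derivative_def]] .
  moreover have "(\<lambda>h. (h *\<^sub>R f') $ k) = (*) (f' $ k)" by (auto simp: mult.commute)
  ultimately show ?thesis by (simp add: has_field_derivative_def)
qed

lemma curve_vd:
  assumes "regular_smooth_curve I \<gamma>" "open I" "t \<in> I"
  shows "(\<gamma> has_vector_derivative vector_derivative \<gamma> (at t)) (at t)"
proof -
  have "[] \<in> lists Basis" by simp
  then have "fold (\<lambda>i g. pd g i) [] \<gamma> differentiable_on I" using assms(1) unfolding regular_smooth_curve_def smooth_on_def by blast
  then have "\<gamma> differentiable_on I" by simp
  then have "\<gamma> differentiable (at t)" using assms(2,3) differentiable_on_eq_differentiable_at by blast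
  then show ?thesis using vector_derivative_works by blast
qed

lemma holo_Gam0: "holonomy_invariant Gam0 Fex"
  unfolding holonomy_invariant_def
proof (intro allI impI, elim conjE)
  fix a b :: real and \<gamma> V and t :: real
  assume a: "a < 0" and b: "0 < b" and rc: "regular_smooth_curve {a<..<b} \<gamma>"
    and par: "parallel_along Gam0 {a<..<b} \<gamma> V" and t: "t \<in> {a<..<b}"
  define g1 where "g1 s = V s $ 2" for s
  define g2 where "g2 s = - V s $ 1 + \<gamma> s $ 1 * V s $ 2" for s
  have d: "(g1 has_real_derivative 0) (at s) \<and> (g2 has_real_derivative 0) (at s)"
    if s: "s \<in> {a<..<b}" for s
  proof -
    have G: "(\<gamma> has_vector_derivative vector_derivative \<gamma> (at s)) (at s)"
      using curve_vd[OF rc _ s] by simp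
    have P: "(V has_vector_derivative
      (\<chi> k. - (\<Sum>i\<in>UNIV. \<Sum>j\<in>UNIV. Gam0 k i j (\<gamma> s) * vector_derivative \<gamma> (at s) $ i * V s $ j))) (at s)"
      using par s unfolding parallel_along_def by blast
    have V1: "((\<lambda>x. V x $ 1) has_real_derivative vector_derivative \<gamma> (at s) $ 1 * V s $ 2) (at s)"
      using vd_nth[OF P, of 1] by (simp add: sum_2 Gam0_def two_ne)
    have V2: "((\<lambda>x. V x $ 2) has_real_derivative 0) (at s)"
      using vd_nth[OF P, of 2] by (simp add: sum_2 Gam0_def two_ne)
    have G1: "((\<lambda>x. \<gamma> x $ 1) has_real_derivative vector_derivative \<gamma> (at s) $ 1) (at s)"
      using vd_nth[OF G] .
    have "(g2 has_real_derivative 0) (at s)"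
      unfolding g2_def[abs_def]
      by (rule derivative_eq_intros V1 V2 G1 refl | simp)+
    then show ?thesis using V2 unfolding g1_def[abs_def] by simp
  qed
  have "\<exists>c. \<forall>x\<in>{a<..<b}. g1 x = c"
    by (rule has_field_derivative_zero_constant) (use d in \<open>auto intro: has_field_derivative_at_within\<close>)
  then obtain c1 where c1: "\<forall>x\<in>{a<..<b}. g1 x = c1" by blast
  have "\<exists>c. \<forall>x\<in>{a<..<b}. g2 x = c"
    by (rule has_field_derivative_zero_constant) (use d in \<open>auto intro: has_field_derivative_at_within\<close>)
  then obtain c2 where c2: "\<forall>x\<in>{a<..<b}. g2 x = c2" by blast
  have z: "0 \<in> {a<..<b}" using a b by simp
  have "Fex (\<gamma> s) (V s) = sqrt (4 * (g1 s)^2 + 12 * (g2 s)^2) - g1 s" for s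
    by (simp add: Fex_def g1_def g2_def)
  then show "Fex (\<gamma> t) (V t) = Fex (\<gamma> 0) (V 0)"
    using c1 c2 t z by simp
qed



lemma ode_exists:
  fixes M :: "2 \<Rightarrow> 2 \<Rightarrow> real \<Rightarrow> real" and v0 :: "real^2"
  assumes cM: "\<And>k j. continuous_on UNIV (M k j)"
  shows "\<exists>h>0. \<exists>V. V 0 = v0 \<and> (\<forall>t\<in>{-h<..<h}.
           (V has_vector_derivative (\<chi> k. \<Sum>j\<in>UNIV. M k j t * V t $ j)) (at t))"
proof -
  define A where "A t v = (\<chi> k. \<Sum>j\<in>UNIV. M k j t * v $ j)" for t and v :: "real^2"
  define N where "N t = (\<Sum>k\<in>UNIV. \<Sum>j\<in>UNIV. \<bar>M k j t\<bar>)" for t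
  have "continuous_on {-1..1} N" unfolding N_def
    by (auto intro!: continuous_intros intro: continuous_on_subset[OF cM])
  then have "bounded (N ` {-1..1})" by (intro compact_imp_bounded compact_continuous_image) auto
  then obtain B0 where B0: "\<forall>x\<in>N ` {-1..1}. norm x \<le> B0" unfolding bounded_iff by blast
  define B where "B = max B0 0"
  have B: "0 \<le> B" by (simp add: B_def)
  have Abound: "norm (A t v) \<le> B * norm v" if t: "t \<in> {-1..1}" for t v
  proof -
    have "norm (A t v) \<le> (\<Sum>k\<in>UNIV. \<bar>A t v $ k\<bar>)" by (rule norm_le_l1_cart)
    also have "\<dots> \<le> (\<Sum>k\<in>UNIV. \<Sum>j\<in>UNIV. \<bar>M k j t\<bar> * norm v)"
    proof (rule sum_mono)
      fix k
      have "\<bar>A t v $ k\<bar> \<le> (\<Sum>j\<in>UNIV. \<bar>M k j t * v $ j\<bar>)" unfolding A_def by (simp add: sum_abs)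
      also have "\<dots> \<le> (\<Sum>j\<in>UNIV. \<bar>M k j t\<bar> * norm v)"
        by (rule sum_mono) (simp add: abs_mult mult_left_mono component_le_norm_cart)
      finally show "\<bar>A t v $ k\<bar> \<le> (\<Sum>j\<in>UNIV. \<bar>M k j t\<bar> * norm v)" .
    qed
    also have "\<dots> = N t * norm v" by (simp add: N_def sum_distrib_right)
    also have "\<dots> \<le> B * norm v"
    proof -
      have "N t \<le> B" using B0 t by (force simp: B_def)
      then show ?thesis by (simp add: mult_right_mono)
    qed
    finally show ?thesis .
  qed
  have Alin: "A t u - A t v = A t (u - v)" for t u v
    by (simp add: A_def vec_eq_iff algebra_simps sum_subtractf[symmetric])
  define h where "h = 1 / (4 * (B + 1))"
  have h0: "0 < h" using B by (simp add: h_def)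
  have h1: "h \<le> 1" using B by (simp add: h_def field_simps)
  have hB: "4 * h * B < 1" using B by (simp add: h_def field_simps)
  have hsub: "{-h..h} \<subseteq> {-1..1}" using h1 by auto
  define P where "P f t = v0 + integral {-h..t} (\<lambda>s. A s (f s)) - integral {-h..0} (\<lambda>s. A s (f s))"
    for f :: "real \<Rightarrow> real^2" and t
  have contA: "continuous_on {-h..h} (\<lambda>s. A s (f s))" if "continuous_on {-h..h} f" for f
    unfolding A_def by (auto intro!: continuous_intros that intro: continuous_on_subset[OF cM])
  have contP: "continuous_on {-h..h} (P f)" if "continuous_on {-h..h} f" for f
  proof -
    have "continuous_on {-h..h} (\<lambda>t. integral {-h..t} (\<lambda>s. A s (f s)))"
      by (rule indefinite_integral_continuous_1[OF integrable_continuous_real[OF contA[OF that]]])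
    then show ?thesis unfolding P_def by (intro continuous_intros)
  qed
  have cl: "clamp (-h) h x \<in> {-h..h}" for x
    using clamp_in_interval[of "-h" h x] h0 by (simp add: cbox_interval)
  define \<Phi> where "\<Phi> f = (SOME g :: (real, real^2) bcontfun. \<forall>x. apply_bcontfun g x = P f (clamp (-h) h x))"
    for f :: "(real, real^2) bcontfun"
  have \<Phi>: "apply_bcontfun (\<Phi> f) x = P f (clamp (-h) h x)" for f x
  proof -
    have "continuous_on (cbox (-h) h) (P f)" using contP[of f] by (simp add: cbox_interval)
    then obtain g :: "(real, real^2) bcontfun" where "\<And>x. apply_bcontfun g x = P f (clamp (-h) h x)"
      by (rule continuous_on_cbox_bcontfunE) blast
    then have "\<exists>g :: (real, real^2) bcontfun. \<forall>x. apply_bcontfun g x = P f (clamp (-h) h x)" by blast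
    then show ?thesis unfolding \<Phi>_def by (rule someI_ex[where P="\<lambda>g. \<forall>x. apply_bcontfun g x = P f (clamp (-h) h x)", THEN spec])
  qed
  have contr: "dist (\<Phi> f) (\<Phi> g) \<le> (4 * h * B) * dist f g" for f g
  proof (rule dist_bound)
    fix x
    define y where "y = clamp (-h) h x"
    have y: "y \<in> {-h..h}" unfolding y_def by (rule cl)
    define D where "D s = A s (apply_bcontfun f s - apply_bcontfun g s)" for s
    have cD: "continuous_on {-h..h} D" unfolding D_def by (rule contA) (intro continuous_intros continuous_on_apply_bcontfun)
    have Db: "norm (D s) \<le> B * dist f g" if "s \<in> {-h..h}" for s
    proof -
      have "norm (D s) \<le> B * norm (apply_bcontfun f s - apply_bcontfun g s)"
        unfolding D_def using Abound hsub that by blast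
      also have "\<dots> \<le> B * dist f g"
        using dist_bounded[of f s g] B by (simp add: dist_norm mult_left_mono)
      finally show ?thesis .
    qed
    have cDy: "continuous_on {-h..y} D" by (rule continuous_on_subset[OF cD]) (use y in auto)
    have cD0: "continuous_on {-h..0} D" by (rule continuous_on_subset[OF cD]) (use h0 in auto)
    have hy: "-h \<le> y" using y by simp
    have hz: "-h \<le> 0" using h0 by simp
    have i1: "norm (integral {-h..y} D) \<le> B * dist f g * (y - -h)"
      by (rule integral_bound[OF hy cDy]) (rule Db, use y in auto)
    have i2: "norm (integral {-h..0} D) \<le> B * dist f g * (0 - -h)"
      by (rule integral_bound[OF hz cD0]) (rule Db, use h0 in auto)
    have intf: "(\<lambda>s. A s (apply_bcontfun f s)) integrable_on {-h..u}" if "u \<le> h" for u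
      by (rule integrable_continuous_real, rule continuous_on_subset[OF contA[of f]]) (use that in auto)
    have intg: "(\<lambda>s. A s (apply_bcontfun g s)) integrable_on {-h..u}" if "u \<le> h" for u
      by (rule integrable_continuous_real, rule continuous_on_subset[OF contA[of g]]) (use that in auto)
    have eq: "P f y - P g y = integral {-h..y} D - integral {-h..0} D"
      unfolding P_def D_def
      using integral_diff[OF intf intg, of y] integral_diff[OF intf intg, of 0] y h0
      by (simp add: Alin algebra_simps)
    have "dist (\<Phi> f x) (\<Phi> g x) = norm (integral {-h..y} D - integral {-h..0} D)"
      by (simp add: \<Phi> y_def[symmetric] dist_norm eq)
    also have "\<dots> \<le> norm (integral {-h..y} D) + norm (integral {-h..0} D)" by (rule norm_triangle_ineq4)
    also have "\<dots> \<le> B * dist f g * (y - -h) + B * dist f g * (0 - -h)" using i1 i2 by simp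
    also have "\<dots> \<le> B * dist f g * (2*h) + B * dist f g * (2*h)"
      using y h0 B zero_le_dist[of f g]
      by (intro add_mono mult_left_mono) auto
    also have "\<dots> = (4 * h * B) * dist f g" by (simp add: algebra_simps)
    finally show "dist (\<Phi> f x) (\<Phi> g x) \<le> (4 * h * B) * dist f g" .
  qed
  have "\<exists>!F. \<Phi> F = F"
    by (rule banach_fix_type[of "4*h*B"]) (use h0 B hB contr in auto)
  then obtain F where F: "\<Phi> F = F" by blast
  define V where "V = apply_bcontfun F"
  have VP: "V t = P V t" if "t \<in> {-h..h}" for t
  proof -
    have "t \<in> cbox (-h) h" using that by (simp add: cbox_interval)
    then have ct: "clamp (-h) h t = t" by (rule clamp_cancel_cbox)
    have "apply_bcontfun (\<Phi> F) t = P V t" by (simp only: \<Phi> ct V_def)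
    then show ?thesis using F by (simp add: V_def)
  qed
  have "V 0 = v0" using VP[of 0] h0 by (simp add: P_def)
  moreover have "(V has_vector_derivative A t (V t)) (at t)" if t: "t \<in> {-h<..<h}" for t
  proof -
    have cV: "continuous_on {-h..h} (\<lambda>s. A s (V s))" by (rule contA) (simp add: V_def)
    have tt: "t \<in> {-h..h}" using t by auto
    have "((\<lambda>u. integral {-h..u} (\<lambda>s. A s (V s))) has_vector_derivative A t (V t)) (at t within {-h..h})"
      by (rule integral_has_vector_derivative[OF cV tt])
    then have "((\<lambda>u. integral {-h..u} (\<lambda>s. A s (V s))) has_vector_derivative A t (V t)) (at t)"
      using at_within_interior[of t "{-h..h}"] t by (simp add: interior_atLeastAtMost_real)
    then have "(P V has_vector_derivative (0 + A t (V t) - 0)) (at t)"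
      unfolding P_def[abs_def]
      by (intro has_vector_derivative_diff has_vector_derivative_add has_vector_derivative_const)
    then have "(P V has_vector_derivative A t (V t)) (at t)" by simp
    then show ?thesis
    proof (rule has_vector_derivative_transform_within_open[where S="{-h<..<h}"])
      fix y assume "y \<in> {-h<..<h}"
      then show "P V y = V y" by (intro VP[symmetric]) auto
    qed (use t in auto)
  qed
  ultimately show ?thesis using h0 unfolding A_def by blast
qed



definition uvec :: "christoffel \<Rightarrow> real^2 \<Rightarrow> real^2 \<Rightarrow> real^2 \<Rightarrow> real^2" where
  "uvec Gam p w v = (\<chi> k. - (\<Sum>i\<in>UNIV. \<Sum>j\<in>UNIV. Gam k i j p * w $ i * v $ j))"

lemma uvec_neg: "uvec Gam p w (-v) = - uvec Gam p w v"
  by (simp add: uvec_def vec_eq_iff sum_negf)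

lemma covD_cont: "is_covD Gam \<Longrightarrow> continuous_on UNIV (Gam k i j)"
proof -
  assume "is_covD Gam"
  then have "fold (\<lambda>i g. pd g i) [] (Gam k i j) differentiable_on UNIV"
    unfolding is_covD_def smooth_on_def by blast
  then show ?thesis by (simp add: differentiable_imp_continuous_on)
qed

lemma line_vd: "vector_derivative (\<lambda>t. p + t *\<^sub>R w) (at t) = w"
  by (rule vector_derivative_at) (auto intro!: derivative_eq_intros)

lemma line_vd': "((\<lambda>t. p + t *\<^sub>R w) has_vector_derivative w) (at t)"
  by (auto intro!: derivative_eq_intros)

lemma line_regular: "w \<noteq> 0 \<Longrightarrow> regular_smooth_curve I (\<lambda>t. p + t *\<^sub>R w)"
  unfolding regular_smooth_curve_def line_vd
  by (auto intro!: smooth_affine[where c=p and L="\<lambda>t. t *\<^sub>R w"] linear_scaleR_left)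

lemma parallel_exists:
  assumes "is_covD Gam"
  shows "\<exists>h>0. \<exists>V. V 0 = v0 \<and> parallel_along Gam {-h<..<h} (\<lambda>t. p + t *\<^sub>R w) V"
proof -
  define M where "M k j t = - (\<Sum>i\<in>UNIV. Gam k i j (p + t *\<^sub>R w) * w $ i)" for k j t
  have cM: "continuous_on UNIV (M k j)" for k j
    unfolding M_def
    by (intro continuous_intros continuous_on_compose2[OF covD_cont[OF assms]]) auto
  obtain h V where h: "h > 0" "V 0 = v0"
    and V: "\<forall>t\<in>{-h<..<h}. (V has_vector_derivative (\<chi> k. \<Sum>j\<in>UNIV. M k j t * V t $ j)) (at t)"
    using ode_exists[of M v0] cM by blast
  have eq: "(\<chi> k. \<Sum>j\<in>UNIV. M k j t * V t $ j) =
     (\<chi> k. - (\<Sum>i\<in>UNIV. \<Sum>j\<in>UNIV. Gam k i j (p + t *\<^sub>R w) * vector_derivative (\<lambda>t. p + t *\<^sub>R w) (at t) $ i * V t $ j))" for t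
    by (simp add: M_def line_vd vec_eq_iff sum_2 algebra_simps)
  show ?thesis using h V unfolding parallel_along_def eq by blast
qed

lemma key:
  assumes ic: "is_covD Gam" and hi: "holonomy_invariant Gam Fex" and w: "w \<noteq> 0" and v: "v \<noteq> 0"
  shows "4 * (v$2) * (uvec Gam p w v $ 2) + 12 * (- v$1 + p$1 * v$2) * (- uvec Gam p w v $ 1 + w$1 * v$2 + p$1 * uvec Gam p w v $ 2)
     = sqrt (4 * (v$2)^2 + 12 * (- v$1 + p$1 * v$2)^2) * uvec Gam p w v $ 2"
proof -
  define \<gamma> where "\<gamma> t = p + t *\<^sub>R w" for t
  obtain h V where h: "h > 0" "V 0 = v" and par: "parallel_along Gam {-h<..<h} \<gamma> V"
    using parallel_exists[OF ic, of v p w] unfolding \<gamma>_def[symmetric] by blast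
  define u where "u = uvec Gam p w v"
  have z: "(0::real) \<in> {-h<..<h}" using h by simp
  have Vd: "(V has_vector_derivative u) (at 0)"
    using bspec[OF par[unfolded parallel_along_def] z] h unfolding \<gamma>_def line_vd u_def uvec_def by simp
  have V1: "((\<lambda>t. V t $ 1) has_real_derivative u $ 1) (at 0)" by (rule vd_nth[OF Vd])
  have V2: "((\<lambda>t. V t $ 2) has_real_derivative u $ 2) (at 0)" by (rule vd_nth[OF Vd])
  have G1: "((\<lambda>t. \<gamma> t $ 1) has_real_derivative w $ 1) (at 0)"
    unfolding \<gamma>_def by (rule vd_nth[OF line_vd'])
  define q where "q t = 4 * (V t $ 2)^2 + 12 * (- (V t $ 1) + \<gamma> t $ 1 * V t $ 2)^2" for t
  define c1 where "c1 = v $ 2"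
  define c2 where "c2 = - v$1 + p$1 * v$2"
  define e where "e = - u $ 1 + w$1 * v$2 + p$1 * u $ 2"
  have q0: "q 0 = 4 * c1^2 + 12 * c2^2" by (simp add: q_def h \<gamma>_def c1_def c2_def)
  have qpos: "q 0 > 0"
  proof -
    have "c1 \<noteq> 0 \<or> c2 \<noteq> 0"
    proof (rule ccontr)
      assume "\<not> (c1 \<noteq> 0 \<or> c2 \<noteq> 0)"
      then have "v $ 1 = 0" "v $ 2 = 0" by (auto simp: c1_def c2_def)
      then have "v = 0" by (simp add: vec_eq_iff forall_2)
      then show False using v by simp
    qed
    then show ?thesis unfolding q0 by (auto simp: add_pos_nonneg add_nonneg_pos)
  qed
  have dq: "(q has_real_derivative (8 * c1 * u$2 + 24 * c2 * e)) (at 0)"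
    unfolding q_def[abs_def]
    apply (rule derivative_eq_intros V1 V2 G1 refl | simp)+
    apply (simp add: h \<gamma>_def c1_def c2_def e_def algebra_simps power2_eq_square)
    done
  have dF: "((\<lambda>t. sqrt (q t) - V t $ 2) has_real_derivative
      (inverse (sqrt (q 0)) / 2 * (8 * c1 * u$2 + 24 * c2 * e) - u $ 2)) (at 0)"
    by (intro DERIV_diff DERIV_chain2[OF DERIV_real_sqrt[OF qpos] dq] V2)
  have Fq: "Fex (\<gamma> t) (V t) = sqrt (q t) - V t $ 2" for t
    by (simp add: Fex_def q_def)
  have const: "sqrt (q t) - V t $ 2 = sqrt (q 0) - V 0 $ 2" if "t \<in> {-h<..<h}" for t
    using hi that h line_regular[OF w, of "{-h<..<h}" p] par
    unfolding holonomy_invariant_def Fq[symmetric] \<gamma>_def[symmetric]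
    by (metis add.inverse_neutral greaterThanLessThan_iff neg_less_0_iff_less)
  have "((\<lambda>t. sqrt (q 0) - V 0 $ 2) has_real_derivative
      (inverse (sqrt (q 0)) / 2 * (8 * c1 * u$2 + 24 * c2 * e) - u $ 2)) (at 0)"
    by (rule has_field_derivative_transform_within_open[OF dF, of "{-h<..<h}"]) (use h const in auto)
  then have "inverse (sqrt (q 0)) / 2 * (8 * c1 * u$2 + 24 * c2 * e) - u $ 2 = 0"
    using DERIV_const DERIV_unique by blast
  moreover have "sqrt (q 0) > 0" using qpos by simp
  ultimately have "4 * c1 * u$2 + 12 * c2 * e = sqrt (q 0) * u $ 2"
    by (simp add: field_simps)
  then show ?thesis by (simp add: q0 c1_def c2_def e_def u_def)
qed



lemma u2zero:
  assumes ic: "is_covD Gam" and hi: "holonomy_invariant Gam Fex" and w: "w \<noteq> 0" and v: "v \<noteq> 0"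
  shows "uvec Gam p w v $ 2 = 0 \<and> ((- v$1 + p$1 * v$2) \<noteq> 0 \<longrightarrow> - uvec Gam p w v $ 1 + w$1 * v$2 = 0)"
proof -
  define u where "u = uvec Gam p w v"
  define s where "s = sqrt (4 * (v$2)^2 + 12 * (- v$1 + p$1 * v$2)^2)"
  have K1: "4 * (v$2) * (u $ 2) + 12 * (- v$1 + p$1 * v$2) * (- u $ 1 + w$1 * v$2 + p$1 * u $ 2) = s * u $ 2"
    using key[OF ic hi w v, of p] by (simp add: u_def s_def)
  have v': "-v \<noteq> 0" using v by simp
  have K2: "4 * (v$2) * (u $ 2) + 12 * (- v$1 + p$1 * v$2) * (- u $ 1 + w$1 * v$2 + p$1 * u $ 2) = - (s * u $ 2)"
  proof -
    have sq: "sqrt (4*((-v)$2)^2 + 12*(-(-v)$1 + p$1*(-v)$2)^2) = s"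
      unfolding s_def by (simp add: power2_eq_square algebra_simps)
    show ?thesis using key[OF ic hi w v', of p] unfolding sq by (simp add: u_def uvec_neg algebra_simps)
  qed
  have su: "s * u $ 2 = 0" using K1 K2 by simp
  have "s > 0"
  proof -
    have "v $ 2 \<noteq> 0 \<or> (- v$1 + p$1 * v$2) \<noteq> 0"
    proof (rule ccontr)
      assume "\<not> ?thesis"
      then have "v $ 1 = 0" "v $ 2 = 0" by auto
      then have "v = 0" by (simp add: vec_eq_iff forall_2)
      then show False using v by simp
    qed
    then have "0 < (v$2)^2 \<or> 0 < (- v$1 + p$1 * v$2)^2" by (metis zero_less_power2)
    moreover have "0 \<le> (v$2)^2" "0 \<le> (- v$1 + p$1 * v$2)^2" by simp_all
    ultimately have "0 < 4 * (v$2)^2 + 12 * (- v$1 + p$1 * v$2)^2" by linarith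
    then show ?thesis unfolding s_def by simp
  qed
  then have u2: "u $ 2 = 0" using su by simp
  then have "12 * (- v$1 + p$1 * v$2) * (- u $ 1 + w$1 * v$2) = 0" using K1 su by simp
  then show ?thesis using u2 unfolding u_def by auto
qed

lemma uvec_axis: "uvec Gam p (axis i 1) v $ m = - (\<Sum>j\<in>UNIV. Gam m i j p * v $ j)"
proof -
  have "(\<Sum>i'\<in>UNIV. \<Sum>j\<in>UNIV. Gam m i' j p * axis i 1 $ i' * v $ j) = (\<Sum>j\<in>UNIV. Gam m i j p * v $ j)"
    using exhaust_2[of i] by (auto simp: sum_2 axis_def two_ne)
  then show ?thesis by (simp add: uvec_def)
qed

lemma unique:
  assumes ic: "is_covD Gam" and hi: "holonomy_invariant Gam Fex"
  shows "Gam = Gam0"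
proof -
  have "Gam k i j p = Gam0 k i j p" for k i j p
  proof -
    have w: "axis i (1::real) \<noteq> 0" by (simp add: axis_eq_0_iff)
    note U = u2zero[OF ic hi w]
    have g2: "Gam 2 i j' p = 0" for j'
    proof -
      have "axis j' (1::real) \<noteq> 0" by (simp add: axis_eq_0_iff)
      from conjunct1[OF U[OF this, of p]]
      have "- (\<Sum>j\<in>UNIV. Gam 2 i j p * axis j' 1 $ j) = 0" by (simp only: uvec_axis)
      then show ?thesis
        using exhaust_2[of j'] by (auto simp: sum_2 axis_def two_ne)
    qed
    have n1: "vector [-1, 0] \<noteq> (0::real^2)" by (simp add: vec_eq_iff forall_2)
    have g11: "Gam 1 i 1 p = 0"
      using conjunct2[OF U[OF n1, of p]] by (simp add: uvec_axis sum_2)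
    have n2: "vector [p$1 - 1, 1] \<noteq> (0::real^2)" by (simp add: vec_eq_iff forall_2)
    have g12: "Gam 1 i 2 p = - axis i 1 $ 1"
      using conjunct2[OF U[OF n2, of p]] g11 by (simp add: uvec_axis sum_2 algebra_simps)
    show ?thesis
      using exhaust_2[of k] exhaust_2[of j] g2 g11 g12
      by (auto simp: Gam0_def axis_def two_ne)
  qed
  then show ?thesis by (intro ext)
qed


lemma vec_ne: "(\<lambda>p::real^2. vector [-1, 0] :: real^2) \<noteq> (\<lambda>p. 0)"
proof
  assume "(\<lambda>p::real^2. vector [-1, 0] :: real^2) = (\<lambda>p. 0)"
  then have "(vector [-1, 0] :: real^2) $ 1 = (0::real^2) $ 1" by metis
  then show False by simp
qed

lemma not_tf: "is_covD Gam \<Longrightarrow> torsion_free Gam \<Longrightarrow> holonomy_invariant Gam Fex \<Longrightarrow> False"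
proof -
  assume a: "is_covD Gam" "torsion_free Gam" "holonomy_invariant Gam Fex"
  have G: "Gam = Gam0" by (rule unique[OF a(1) a(3)])
  have "torsion Gam0 E1 E2 = (\<lambda>p. 0)"
    using a(2) smooth_E1 smooth_E2 unfolding G torsion_free_def by blast
  moreover have "torsion Gam0 E1 E2 = (\<lambda>p. vector [-1, 0])"
    by (rule torsion_E1E2) (simp_all add: covD_E1 covD_E2)
  ultimately show False using vec_ne by simp
qed

theorem mainTheorem8:
  shows "(\<exists>Gam. is_covD Gam \<and> (\<forall>X. covD Gam X E1 = (\<lambda>p. 0)) \<and> (\<forall>X. covD Gam X E2 = (\<lambda>p. 0)))
    \<and> (\<forall>Gam. is_covD Gam \<and> (\<forall>X. covD Gam X E1 = (\<lambda>p. 0)) \<and> (\<forall>X. covD Gam X E2 = (\<lambda>p. 0)) \<longrightarrow>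
          holonomy_invariant Gam Fex
        \<and> generalized_Berwald Fex
        \<and> (\<forall>Gam'. is_covD Gam' \<and> holonomy_invariant Gam' Fex \<longrightarrow> Gam' = Gam)
        \<and> torsion Gam E1 E2 = (\<lambda>p. vector [-1, 0])
        \<and> torsion Gam E1 E2 \<noteq> (\<lambda>p. 0))
    \<and> \<not> (\<exists>Gam. is_covD Gam \<and> torsion_free Gam \<and> holonomy_invariant Gam Fex)
    \<and> \<not> Berwald Fex"
proof -
  have P1: "\<exists>Gam. is_covD Gam \<and> (\<forall>X. covD Gam X E1 = (\<lambda>p. 0)) \<and> (\<forall>X. covD Gam X E2 = (\<lambda>p. 0))"
    using is_covD_Gam0 covD_E1 covD_E2 by blast
  have P2: "holonomy_invariant Gam Fex
        \<and> generalized_Berwald Fex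
        \<and> (\<forall>Gam'. is_covD Gam' \<and> holonomy_invariant Gam' Fex \<longrightarrow> Gam' = Gam)
        \<and> torsion Gam E1 E2 = (\<lambda>p. vector [-1, 0])
        \<and> torsion Gam E1 E2 \<noteq> (\<lambda>p. 0)"
    if h: "is_covD Gam \<and> (\<forall>X. covD Gam X E1 = (\<lambda>p. 0)) \<and> (\<forall>X. covD Gam X E2 = (\<lambda>p. 0))" for Gam
  proof -
    have G: "Gam = Gam0" using h Gam_unique0 by blast
    have a: "holonomy_invariant Gam Fex" using G holo_Gam0 by simp
    have b: "generalized_Berwald Fex" unfolding generalized_Berwald_def using is_covD_Gam0 holo_Gam0 by blast
    have c: "\<forall>Gam'. is_covD Gam' \<and> holonomy_invariant Gam' Fex \<longrightarrow> Gam' = Gam"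
      using G unique by blast
    have T: "torsion Gam E1 E2 = (\<lambda>p. vector [-1, 0])" using h torsion_E1E2 by blast
    have d: "torsion Gam E1 E2 \<noteq> (\<lambda>p. 0)" unfolding T by (rule vec_ne)
    show ?thesis using a b c T d by blast
  qed
  have P3: "\<not> (\<exists>Gam. is_covD Gam \<and> torsion_free Gam \<and> holonomy_invariant Gam Fex)"
    using not_tf by blast
  have P4: "\<not> Berwald Fex" unfolding Berwald_def using not_tf by blast
  show ?thesis using P1 P2 P3 P4 by blast
qed

end
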